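(* Let the setting and $W$, $QW$ be as in the context, and suppose $\mathfrak{g}$ is conformal with respect to $\nabla$ with conformal factor $\phi$. Let $\tilde\Pi_p^q$ denote parallel transport of the connection $\tilde\nabla_XY=\nabla_XY+X(\log\phi)Y$. Then for all $p,q\in\mathcal{M}$ and every $A\in\mathrm{Hom}(T_p\mathcal{M},\mathbb{R}^2)$, \[ W_p(A)=W_q(A\circ\tilde\Pi_q^p)\qquad\text{and}\qquad QW_p(A)=QW_q(A\circ\tilde\Pi_q^p). \]
   Context: Setting. $(\mathcal{M},\mathfrak{g})$ is a compact smooth two-dimensional Riemannian manifold which is a topological disc with smooth boundary, and $\nabla$ is a flat, symmetric (torsion-free) affine connection on $\mathcal{M}$. Let $\mathfrak{a},\mathfrak{b},\mathfrak{c}$ be $\nabla$-parallel vector fields with $\mathfrak{a}+\mathfrak{b}+\mathfrak{c}=0$, any two linearly independent at every point. Norms are taken with respect to $\mathfrak{g}$, and $\mathcal{M}$ is oriented so that $(\mathfrak{a},\mathfrak{b})$ is positive. Conformality. $\mathfrak{g}$ is conformal with respect to $\nabla$ if there is a positive function $\phi$ such that for all $\nabla$-parallel vector fields $\xi,\eta$ and all $p,q$, $\mathfrak{g}_p(\xi_p,\eta_p)/\phi^2(p)=\mathfrak{g}_q(\xi_q,\eta_q)/\phi^2(q)$. The functions $\Phi$ and $\Psi$. $\Phi:[0,\infty)\to[0,\infty)$ satisfies: - $\Phi(r)=0$ if and only if $r=1$; - $\Phi(r)\ge\alpha_\Phi(r-1)^2$; - $\Phi(r)\le C_\Phi(1+r^2)$;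 - $|\Phi(r)-\Phi(s)|\le L_\Phi(1+|r|+|s|)|r-s|$ for $r,s>0$. $\Psi:\mathbb{R}\to[0,\infty)$ satisfies: - $\Psi(a)=0$ if and only if $a=1$; - $\Psi(a)>\alpha_\Psi\sqrt{|a|}$ for $a<0$; - $\Psi(a)<C_\Psi(1+|a|)$; - $|\Psi(a)-\Psi(b)|\le L_\Psi|a-b|$. All constants are positive. Energy density. Let $\nu=(\mathfrak{g}(\mathfrak{a},\mathfrak{a})\mathfrak{g}(\mathfrak{b},\mathfrak{b})-\mathfrak{g}(\mathfrak{a},\mathfrak{b})^2)^{1/2}$. For $A\in\mathrm{Hom}(T_p\mathcal{M},\mathbb{R}^2)$, let $\det A=\det[A(\mathfrak{a}_p)|A(\mathfrak{b}_p)]/\nu(p)$, with $\det[u|w]=u_1w_2-u_2w_1$. With $\rho^{\mathfrak{u}}=|\mathfrak{u}|/(|\mathfrak{a}|+|\mathfrak{b}|+|\mathfrak{c}|)$, \[ W_p(A)=\sum_{\mathfrak{u}\in\{\mathfrak{a},\mathfrak{b},\mathfrak{c}\}}\rho^{\mathfrak{u}}(p)\Phi(|A(\mathfrak{u}_p)|/|\mathfrak{u}_p|)+\Psi(\det A). \] $QW_p$ is the quasiconvex envelope of $W_p$ on $\mathrm{Hom}(T_p\mathcal{M},\mathbb{R}^2)$: $QW_p(A)=\inf\{\frac{1}{|D|}\int_DW_p(A+d\varphi):\varphi\in C^\infty_c(D;\mathbb{R}^2)\}$, where $D$ is the unit disc in $T_p\mathcal{M}$. *)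

theory Defs
  imports "HOL-Analysis.Analysis"
begin

text \<open>Coordinate model. The compact disc M is represented through a global chart as a
subset of real^2; tangent vectors at every point are coordinate vectors in real^2.\<close>

text \<open>Smoothness (C-infinity, up to the boundary): all iterated Frechet derivatives
exist (relative to S). D vs x is the iterated derivative in the directions vs.\<close>
definition smooth_on :: "'a::real_normed_vector set \<Rightarrow> ('a \<Rightarrow> 'b::real_normed_vector) \<Rightarrow> bool" where
  "smooth_on S f \<longleftrightarrow> (\<exists>D :: 'a list \<Rightarrow> 'a \<Rightarrow> 'b.
      (\<forall>x\<in>S. D [] x = f x) \<and>
      (\<forall>vs. \<forall>x\<in>S. (D vs has_derivative (\<lambda>h. D (h # vs) x)) (at x within S)))"

definition smooth_disc :: "(real^2) set \<Rightarrow> bool" where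
  "smooth_disc M \<longleftrightarrow> M homeomorphic cball (0::real^2) 1 \<and>
     (\<exists>f :: real^2 \<Rightarrow> real. smooth_on UNIV f \<and> M = {x. f x \<le> 0} \<and>
        (\<forall>x. f x = 0 \<longrightarrow> frechet_derivative f (at x) \<noteq> (\<lambda>h. 0)))"

definition gmet :: "(real^2 \<Rightarrow> real^2^2) \<Rightarrow> real^2 \<Rightarrow> real^2 \<Rightarrow> real^2 \<Rightarrow> real" where
  "gmet G p u v = u \<bullet> (G p *v v)"

definition gnorm :: "(real^2 \<Rightarrow> real^2^2) \<Rightarrow> real^2 \<Rightarrow> real^2 \<Rightarrow> real" where
  "gnorm G p u = sqrt (gmet G p u u)"

definition riemannian_metric :: "(real^2) set \<Rightarrow> (real^2 \<Rightarrow> real^2^2) \<Rightarrow> bool" where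
  "riemannian_metric M G \<longleftrightarrow> smooth_on M G \<and>
     (\<forall>p\<in>M. transpose (G p) = G p \<and> (\<forall>u. u \<noteq> 0 \<longrightarrow> gmet G p u u > 0))"

text \<open>Christoffel symbols: chr C X Y = component vector of Gamma(X,Y);
nabla_X Y = DY(X) + Gamma(X,Y).\<close>
definition chr :: "real^2^2^2 \<Rightarrow> real^2 \<Rightarrow> real^2 \<Rightarrow> real^2" where
  "chr C X Y = (\<chi> k. \<Sum>i\<in>UNIV. \<Sum>j\<in>UNIV. C $ k $ i $ j * X $ i * Y $ j)"

definition flat_symmetric_connection :: "(real^2) set \<Rightarrow> (real^2 \<Rightarrow> real^2^2^2) \<Rightarrow> bool" where
  "flat_symmetric_connection M \<Gamma> \<longleftrightarrow> smooth_on M \<Gamma> \<and>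
     (\<forall>p\<in>M. \<forall>k i j. \<Gamma> p $ k $ i $ j = \<Gamma> p $ k $ j $ i) \<and>
     (\<exists>D\<Gamma>. (\<forall>p\<in>M. (\<Gamma> has_derivative D\<Gamma> p) (at p within M)) \<and>
        (\<forall>p\<in>M. \<forall>X Y Z.
            chr (D\<Gamma> p X) Y Z - chr (D\<Gamma> p Y) X Z
            + chr (\<Gamma> p) X (chr (\<Gamma> p) Y Z) - chr (\<Gamma> p) Y (chr (\<Gamma> p) X Z) = 0))"

definition parallel_field :: "(real^2) set \<Rightarrow> (real^2 \<Rightarrow> real^2^2^2) \<Rightarrow> (real^2 \<Rightarrow> real^2) \<Rightarrow> bool" where
  "parallel_field M \<Gamma> \<xi> \<longleftrightarrow> smooth_on M \<xi> \<and>
     (\<exists>D\<xi>. \<forall>p\<in>M. (\<xi> has_derivative D\<xi> p) (at p within M) \<and>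
        (\<forall>X. D\<xi> p X + chr (\<Gamma> p) X (\<xi> p) = 0))"

definition conformal :: "(real^2) set \<Rightarrow> (real^2 \<Rightarrow> real^2^2) \<Rightarrow> (real^2 \<Rightarrow> real^2^2^2) \<Rightarrow> (real^2 \<Rightarrow> real) \<Rightarrow> bool" where
  "conformal M G \<Gamma> \<phi> \<longleftrightarrow> (\<forall>p\<in>M. \<phi> p > 0) \<and>
     (\<forall>\<xi> \<eta>. parallel_field M \<Gamma> \<xi> \<and> parallel_field M \<Gamma> \<eta> \<longrightarrow>
        (\<forall>p\<in>M. \<forall>q\<in>M. gmet G p (\<xi> p) (\<eta> p) / (\<phi> p)\<^sup>2 = gmet G q (\<xi> q) (\<eta> q) / (\<phi> q)\<^sup>2))"

definition det2 :: "real^2 \<Rightarrow> real^2 \<Rightarrow> real" where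
  "det2 u w = u $ 1 * w $ 2 - u $ 2 * w $ 1"

definition Wdens :: "(real \<Rightarrow> real) \<Rightarrow> (real \<Rightarrow> real) \<Rightarrow> (real^2 \<Rightarrow> real^2^2)
    \<Rightarrow> (real^2 \<Rightarrow> real^2) \<Rightarrow> (real^2 \<Rightarrow> real^2) \<Rightarrow> (real^2 \<Rightarrow> real^2)
    \<Rightarrow> real^2 \<Rightarrow> (real^2 \<Rightarrow> real^2) \<Rightarrow> real" where
  "Wdens \<Phi> \<Psi> G a b c p A =
     (let na = gnorm G p (a p); nb = gnorm G p (b p); nc = gnorm G p (c p);
          s = na + nb + nc;
          \<nu> = sqrt (gmet G p (a p) (a p) * gmet G p (b p) (b p) - (gmet G p (a p) (b p))\<^sup>2)
      in (na / s) * \<Phi> (norm (A (a p)) / na) + (nb / s) * \<Phi> (norm (A (b p)) / nb)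
         + (nc / s) * \<Phi> (norm (A (c p)) / nc) + \<Psi> (det2 (A (a p)) (A (b p)) / \<nu>))"

definition QWdens :: "(real \<Rightarrow> real) \<Rightarrow> (real \<Rightarrow> real) \<Rightarrow> (real^2 \<Rightarrow> real^2^2)
    \<Rightarrow> (real^2 \<Rightarrow> real^2) \<Rightarrow> (real^2 \<Rightarrow> real^2) \<Rightarrow> (real^2 \<Rightarrow> real^2)
    \<Rightarrow> real^2 \<Rightarrow> (real^2 \<Rightarrow> real^2) \<Rightarrow> real" where
  "QWdens \<Phi> \<Psi> G a b c p A =
     (let D = {x. gmet G p x x < 1}
      in Inf {integral D (\<lambda>x. Wdens \<Phi> \<Psi> G a b c p (\<lambda>v. A v + frechet_derivative \<phi> (at x) v))
                / measure lebesgue D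
             | \<phi> :: real^2 \<Rightarrow> real^2. smooth_on UNIV \<phi> \<and>
                 compact (closure {x. \<phi> x \<noteq> 0}) \<and> closure {x. \<phi> x \<noteq> 0} \<subseteq> D})"

definition C1_path_in :: "(real^2) set \<Rightarrow> (real \<Rightarrow> real^2) \<Rightarrow> (real \<Rightarrow> real^2) \<Rightarrow> bool" where
  "C1_path_in M \<gamma> \<gamma>' \<longleftrightarrow> \<gamma> ` {0..1} \<subseteq> M \<and> continuous_on {0..1} \<gamma>' \<and>
     (\<forall>t\<in>{0..1}. (\<gamma> has_vector_derivative \<gamma>' t) (at t within {0..1}))"

text \<open>Parallel transport along gamma (from gamma 0 to gamma 1) for the connection
tilde-nabla_X Y = nabla_X Y + X(log phi) Y.\<close>
definition tilde_transport :: "(real^2) set \<Rightarrow> (real^2 \<Rightarrow> real^2^2^2) \<Rightarrow> (real^2 \<Rightarrow> real)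
    \<Rightarrow> (real \<Rightarrow> real^2) \<Rightarrow> (real \<Rightarrow> real^2) \<Rightarrow> real^2 \<Rightarrow> real^2" where
  "tilde_transport M \<Gamma> \<phi> \<gamma> \<gamma>' v0 =
     (THE w. \<exists>v :: real \<Rightarrow> real^2. v 0 = v0 \<and> v 1 = w \<and>
        (\<forall>t\<in>{0..1}. (v has_vector_derivative
            - (chr (\<Gamma> (\<gamma> t)) (\<gamma>' t) (v t)
               + frechet_derivative (\<lambda>x. ln (\<phi> x)) (at (\<gamma> t) within M) (\<gamma>' t) *\<^sub>R v t))
          (at t within {0..1})))"

end

theory Submission imports Defs begin

lemma det2_chr_identity:
  "(det2 (chr C X u) b + det2 u (chr C X b)) * det2 a b
   = det2 u b * (det2 (chr C X a) b + det2 a (chr C X b))"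
  by (simp add: chr_def det2_def sum_2) algebra

lemma chr_scale: "chr C X (s *\<^sub>R Y) = s *\<^sub>R chr C X Y"
  by (simp add: chr_def vec_eq_iff sum_2 algebra_simps)
lemma chr_add: "chr C X (Y + Z) = chr C X Y + chr C X Z"
  by (simp add: chr_def vec_eq_iff sum_2 algebra_simps)

lemma cramer:
  assumes "det2 a b \<noteq> 0"
  shows "v = (det2 v b / det2 a b) *\<^sub>R a + (det2 a v / det2 a b) *\<^sub>R b"
proof -
  have "det2 a b *\<^sub>R v = det2 v b *\<^sub>R a + det2 a v *\<^sub>R b"
    by (simp add: vec_eq_iff forall_2 det2_def algebra_simps)
  then have "v = (1 / det2 a b) *\<^sub>R (det2 v b *\<^sub>R a + det2 a v *\<^sub>R b)"
    using assms by (metis divide_self_if scaleR_one scaleR_scaleR times_divide_eq_left mult.commute)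
  then show ?thesis by (simp add: scaleR_add_right)
qed

lemma det2_vderiv:
  assumes "(x has_vector_derivative x') (at t within S)" "(y has_vector_derivative y') (at t within S)"
  shows "((\<lambda>t. det2 (x t) (y t)) has_vector_derivative (det2 x' (y t) + det2 (x t) y')) (at t within S)"
proof -
  have c: "((\<lambda>t. f t $ i) has_vector_derivative f' $ i) (at t within S)"
    if "(f has_vector_derivative f') (at t within S)" for f :: "real \<Rightarrow> real^2" and f' i
    using bounded_linear.has_vector_derivative[OF bounded_linear_vec_nth that] .
  have "((\<lambda>t. x t $ 1 * y t $ 2 - x t $ 2 * y t $ 1) has_vector_derivative
     (x t $ 1 * y' $ 2 + x' $ 1 * y t $ 2 - (x t $ 2 * y' $ 1 + x' $ 2 * y t $ 1))) (at t within S)"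
    by (intro has_vector_derivative_diff has_vector_derivative_mult c assms)
  then show ?thesis unfolding det2_def by (rule has_vector_derivative_eq_rhs) (simp add: algebra_simps)
qed

lemma par_along:
  assumes "parallel_field M \<Gamma> a" "C1_path_in M \<gamma> \<gamma>'" "t \<in> {0..1}"
  shows "((\<lambda>t. a (\<gamma> t)) has_vector_derivative - chr (\<Gamma> (\<gamma> t)) (\<gamma>' t) (a (\<gamma> t))) (at t within {0..1})"
proof -
  obtain Da where Da: "\<forall>p\<in>M. (a has_derivative Da p) (at p within M) \<and> (\<forall>X. Da p X + chr (\<Gamma> p) X (a p) = 0)"
    using assms(1) unfolding parallel_field_def by blast
  have g: "\<gamma> ` {0..1} \<subseteq> M" "(\<gamma> has_vector_derivative \<gamma>' t) (at t within {0..1})"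
    using assms(2,3) unfolding C1_path_in_def by auto
  have gt: "\<gamma> t \<in> M" using g assms(3) by auto
  have "(a has_derivative Da (\<gamma> t)) (at (\<gamma> t) within \<gamma> ` {0..1})"
    using Da gt has_derivative_subset g(1) by blast
  from vector_derivative_diff_chain_within[OF g(2) this]
  have "((a \<circ> \<gamma>) has_vector_derivative Da (\<gamma> t) (\<gamma>' t)) (at t within {0..1})" .
  moreover have "Da (\<gamma> t) (\<gamma>' t) = - chr (\<Gamma> (\<gamma> t)) (\<gamma>' t) (a (\<gamma> t))"
    using Da gt by (metis eq_neg_iff_add_eq_0)
  ultimately show ?thesis by (simp add: o_def)
qed

lemma ell_deriv:
  fixes \<phi> :: "real^2 \<Rightarrow> real"
  assumes "smooth_on M \<phi>" "\<forall>x\<in>M. \<phi> x > 0" "C1_path_in M \<gamma> \<gamma>'" "t \<in> {0..1}"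
  shows "((\<lambda>t. ln (\<phi> (\<gamma> t))) has_vector_derivative
     frechet_derivative (\<lambda>x. ln (\<phi> x)) (at (\<gamma> t) within M) (\<gamma>' t)) (at t within {0..1})"
proof -
  obtain D where D: "\<forall>x\<in>M. D [] x = \<phi> x" "\<forall>vs. \<forall>x\<in>M. (D vs has_derivative (\<lambda>h. D (h # vs) x)) (at x within M)"
    using assms(1) unfolding smooth_on_def by blast
  have g: "\<gamma> ` {0..1} \<subseteq> M" "(\<gamma> has_vector_derivative \<gamma>' t) (at t within {0..1})"
    using assms(3,4) unfolding C1_path_in_def by auto
  have gt: "\<gamma> t \<in> M" using g assms(4) by auto
  have dphi: "(\<phi> has_derivative (\<lambda>h. D [h] (\<gamma> t))) (at (\<gamma> t) within M)"
  proof -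
    have "(D [] has_derivative (\<lambda>h. D [h] (\<gamma> t))) (at (\<gamma> t) within M)"
      using D(2) gt by blast
    then show ?thesis using has_derivative_transform[OF gt] D(1) by metis
  qed
  have "((\<lambda>x. ln (\<phi> x)) has_derivative (\<lambda>h. D [h] (\<gamma> t) * inverse (\<phi> (\<gamma> t)))) (at (\<gamma> t) within M)"
    by (rule has_derivative_ln) (use assms(2) gt dphi in auto)
  then have "(\<lambda>x. ln (\<phi> x)) differentiable (at (\<gamma> t) within M)"
    unfolding differentiable_def by blast
  then have "((\<lambda>x. ln (\<phi> x)) has_derivative frechet_derivative (\<lambda>x. ln (\<phi> x)) (at (\<gamma> t) within M)) (at (\<gamma> t) within M)"
    using frechet_derivative_works by blast
  then have "((\<lambda>x. ln (\<phi> x)) has_derivative frechet_derivative (\<lambda>x. ln (\<phi> x)) (at (\<gamma> t) within M)) (at (\<gamma> t) within \<gamma> ` {0..1})"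
    using has_derivative_subset g(1) by blast
  from vector_derivative_diff_chain_within[OF g(2) this] show ?thesis by (simp add: o_def)
qed

lemma det2_swap: "det2 x y = - det2 y x"
  by (simp add: det2_def)
lemma det2_neg1[simp]: "det2 (- x) y = - det2 x y"
  by (simp add: det2_def)
lemma det2_neg2[simp]: "det2 x (- y) = - det2 x y"
  by (simp add: det2_def)

lemma coeff_const:
  assumes pa: "parallel_field M \<Gamma> a" and pb: "parallel_field M \<Gamma> b"
    and nz: "\<forall>p\<in>M. det2 (a p) (b p) \<noteq> 0"
    and g: "C1_path_in M \<gamma> \<gamma>'"
    and u: "\<forall>t\<in>{0..1}. (u has_vector_derivative - chr (\<Gamma> (\<gamma> t)) (\<gamma>' t) (u t)) (at t within {0..1})"
  shows "det2 (u 1) (b (\<gamma> 1)) / det2 (a (\<gamma> 1)) (b (\<gamma> 1)) = det2 (u 0) (b (\<gamma> 0)) / det2 (a (\<gamma> 0)) (b (\<gamma> 0))"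
proof -
  let ?f = "\<lambda>t. det2 (u t) (b (\<gamma> t)) / det2 (a (\<gamma> t)) (b (\<gamma> t))"
  have "(?f has_field_derivative 0) (at t within {0..1})" if t: "t \<in> {0..1}" for t
  proof -
    define P where "P = chr (\<Gamma> (\<gamma> t)) (\<gamma>' t)"
    have N: "((\<lambda>t. det2 (u t) (b (\<gamma> t))) has_vector_derivative
        (det2 (- P (u t)) (b (\<gamma> t)) + det2 (u t) (- P (b (\<gamma> t))))) (at t within {0..1})"
      unfolding P_def by (rule det2_vderiv[OF u[rule_format, OF t] par_along[OF pb g t]])
    have Dn: "((\<lambda>t. det2 (a (\<gamma> t)) (b (\<gamma> t))) has_vector_derivative
        (det2 (- P (a (\<gamma> t))) (b (\<gamma> t)) + det2 (a (\<gamma> t)) (- P (b (\<gamma> t))))) (at t within {0..1})"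
      unfolding P_def by (rule det2_vderiv[OF par_along[OF pa g t] par_along[OF pb g t]])
    have gt: "\<gamma> t \<in> M" using g t unfolding C1_path_in_def by auto
    have nz': "det2 (a (\<gamma> t)) (b (\<gamma> t)) \<noteq> 0" using nz gt by auto
    have id: "(det2 (P (u t)) (b (\<gamma> t)) + det2 (u t) (P (b (\<gamma> t)))) * det2 (a (\<gamma> t)) (b (\<gamma> t))
        = det2 (u t) (b (\<gamma> t)) * (det2 (P (a (\<gamma> t))) (b (\<gamma> t)) + det2 (a (\<gamma> t)) (P (b (\<gamma> t))))"
      unfolding P_def by (rule det2_chr_identity)
    from DERIV_divide[OF N[unfolded has_real_derivative_iff_has_vector_derivative[symmetric]]
        Dn[unfolded has_real_derivative_iff_has_vector_derivative[symmetric]] nz']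
    show ?thesis using id by (simp add: algebra_simps)
  qed
  then obtain c where "\<forall>x\<in>{0..1}. ?f x = c"
    using has_field_derivative_zero_constant[of "{0..1::real}" ?f] by auto
  then show ?thesis by auto
qed

definition TP :: "(real^2 \<Rightarrow> real) \<Rightarrow> (real^2 \<Rightarrow> real^2) \<Rightarrow> (real^2 \<Rightarrow> real^2) \<Rightarrow> real^2 \<Rightarrow> real^2 \<Rightarrow> real^2 \<Rightarrow> real^2" where
  "TP \<phi> a b p q v = (\<phi> q / \<phi> p) *\<^sub>R ((det2 v (b q) / det2 (a q) (b q)) *\<^sub>R a p
      + (det2 (a q) v / det2 (a q) (b q)) *\<^sub>R b p)"

lemma transport_eq:
  fixes \<phi> :: "real^2 \<Rightarrow> real"
  assumes pa: "parallel_field M \<Gamma> a" and pb: "parallel_field M \<Gamma> b"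
    and nz: "\<forall>p\<in>M. det2 (a p) (b p) \<noteq> 0"
    and phs: "smooth_on M \<phi>" and php: "\<forall>x\<in>M. \<phi> x > 0"
    and g: "C1_path_in M \<gamma> \<gamma>'" and g0: "\<gamma> 0 = q" and g1: "\<gamma> 1 = p"
  shows "tilde_transport M \<Gamma> \<phi> \<gamma> \<gamma>' v0 = TP \<phi> a b p q v0"
proof -
  define k where "k t = frechet_derivative (\<lambda>x. ln (\<phi> x)) (at (\<gamma> t) within M) (\<gamma>' t)" for t
  define lg where "lg t = ln (\<phi> (\<gamma> t))" for t
  have gM: "\<gamma> t \<in> M" if "t \<in> {0..1}" for t using g that unfolding C1_path_in_def by auto
  have qM: "q \<in> M" and pM: "p \<in> M" using gM[of 0] gM[of 1] g0 g1 by auto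
  have l': "(lg has_field_derivative k t) (at t within {0..1})" if "t \<in> {0..1}" for t
    unfolding lg_def k_def has_real_derivative_iff_has_vector_derivative
    by (rule ell_deriv[OF phs php g that])
  have expl: "exp (lg t) = \<phi> (\<gamma> t)" if "t \<in> {0..1}" for t
    unfolding lg_def using php gM[OF that] by simp
  define P where "P t = chr (\<Gamma> (\<gamma> t)) (\<gamma>' t)" for t
  have Pl: "P t (s *\<^sub>R x + r *\<^sub>R y) = s *\<^sub>R P t x + r *\<^sub>R P t y" for t s x r y
    unfolding P_def by (simp add: chr_add chr_scale)
  have Ps: "P t (s *\<^sub>R x) = s *\<^sub>R P t x" for t s x
    unfolding P_def by (simp add: chr_scale)
  let ?ODE = "\<lambda>v. \<forall>t\<in>{0..1}. (v has_vector_derivative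
            - (chr (\<Gamma> (\<gamma> t)) (\<gamma>' t) (v t)
               + frechet_derivative (\<lambda>x. ln (\<phi> x)) (at (\<gamma> t) within M) (\<gamma>' t) *\<^sub>R v t))
          (at t within {0..1})"
  define \<alpha>0 where "\<alpha>0 = det2 v0 (b q) / det2 (a q) (b q)"
  define \<beta>0 where "\<beta>0 = det2 (a q) v0 / det2 (a q) (b q)"
  define v where "v t = (\<phi> q * exp (- lg t)) *\<^sub>R (\<alpha>0 *\<^sub>R a (\<gamma> t) + \<beta>0 *\<^sub>R b (\<gamma> t))" for t
  have ex: "v 0 = v0 \<and> v 1 = TP \<phi> a b p q v0 \<and> ?ODE v"
  proof (intro conjI ballI)
    have "exp (- lg 0) = 1 / \<phi> q" using expl[of 0] g0 by (simp add: exp_minus field_simps)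
    then show "v 0 = v0" unfolding v_def \<alpha>0_def \<beta>0_def
      using php qM g0 cramer[of "a q" "b q" v0] nz qM by (simp add: order_less_imp_not_eq2)
    have "exp (- lg 1) = 1 / \<phi> p" using expl[of 1] g1 by (simp add: exp_minus field_simps)
    then show "v 1 = TP \<phi> a b p q v0" unfolding v_def TP_def \<alpha>0_def \<beta>0_def using g1 by simp
  next
    fix t :: real assume t: "t \<in> {0..1}"
    have s: "((\<lambda>t. \<phi> q * exp (- lg t)) has_field_derivative \<phi> q * (exp (- lg t) * (- k t))) (at t within {0..1})"
      by (rule DERIV_cmult, rule DERIV_chain2[OF DERIV_exp], rule DERIV_minus, rule l'[OF t])
    have w: "((\<lambda>t. \<alpha>0 *\<^sub>R a (\<gamma> t) + \<beta>0 *\<^sub>R b (\<gamma> t)) has_vector_derivative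
        \<alpha>0 *\<^sub>R (- P t (a (\<gamma> t))) + \<beta>0 *\<^sub>R (- P t (b (\<gamma> t)))) (at t within {0..1})"
      unfolding P_def
      by (rule has_vector_derivative_add;
          rule bounded_linear.has_vector_derivative[OF bounded_linear_scaleR_right],
          (rule par_along[OF pa g t] | rule par_along[OF pb g t]))
    have "(v has_vector_derivative
       (\<phi> q * exp (- lg t)) *\<^sub>R (\<alpha>0 *\<^sub>R (- P t (a (\<gamma> t))) + \<beta>0 *\<^sub>R (- P t (b (\<gamma> t))))
       + (\<phi> q * (exp (- lg t) * (- k t))) *\<^sub>R (\<alpha>0 *\<^sub>R a (\<gamma> t) + \<beta>0 *\<^sub>R b (\<gamma> t))) (at t within {0..1})"
      unfolding v_def[abs_def] by (rule has_vector_derivative_scaleR[OF s w])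
    then show "(v has_vector_derivative
            - (chr (\<Gamma> (\<gamma> t)) (\<gamma>' t) (v t)
               + frechet_derivative (\<lambda>x. ln (\<phi> x)) (at (\<gamma> t) within M) (\<gamma>' t) *\<^sub>R v t))
          (at t within {0..1})"
      apply (rule has_vector_derivative_eq_rhs)
      unfolding P_def[symmetric] k_def[symmetric] v_def Ps Pl
      by (simp add: algebra_simps)
  qed
  have un: "w = TP \<phi> a b p q v0" if "\<exists>v. v 0 = v0 \<and> v 1 = w \<and> ?ODE v" for w
  proof -
    from that obtain v where v: "v 0 = v0" "v 1 = w" "?ODE v" by blast
    define u where "u t = exp (lg t) *\<^sub>R v t" for t
    have uode: "\<forall>t\<in>{0..1}. (u has_vector_derivative - chr (\<Gamma> (\<gamma> t)) (\<gamma>' t) (u t)) (at t within {0..1})"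
    proof
      fix t :: real assume t: "t \<in> {0..1}"
      have e: "((\<lambda>t. exp (lg t)) has_field_derivative exp (lg t) * k t) (at t within {0..1})"
        by (rule DERIV_chain2[OF DERIV_exp], rule l'[OF t])
      have vv: "(v has_vector_derivative - (P t (v t) + k t *\<^sub>R v t)) (at t within {0..1})"
        using v(3) t unfolding P_def k_def by blast
      have "(u has_vector_derivative exp (lg t) *\<^sub>R (- (P t (v t) + k t *\<^sub>R v t)) + (exp (lg t) * k t) *\<^sub>R v t)
          (at t within {0..1})"
        unfolding u_def[abs_def] by (rule has_vector_derivative_scaleR[OF e vv])
      then show "(u has_vector_derivative - chr (\<Gamma> (\<gamma> t)) (\<gamma>' t) (u t)) (at t within {0..1})"
        apply (rule has_vector_derivative_eq_rhs)
        unfolding P_def[symmetric] u_def Ps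
        by (simp add: algebra_simps)
    qed
    have nz2: "\<forall>p\<in>M. det2 (b p) (a p) \<noteq> 0" using nz det2_swap by (metis neg_equal_0_iff_equal)
    have c1: "det2 (u 1) (b p) / det2 (a p) (b p) = det2 (u 0) (b q) / det2 (a q) (b q)"
      using coeff_const[OF pa pb nz g uode] g0 g1 by simp
    have c2: "det2 (u 1) (a p) / det2 (b p) (a p) = det2 (u 0) (a q) / det2 (b q) (a q)"
      using coeff_const[OF pb pa nz2 g uode] g0 g1 by simp
    have u0: "u 0 = \<phi> q *\<^sub>R v0" unfolding u_def using expl[of 0] g0 v(1) by simp
    have u1: "u 1 = \<phi> p *\<^sub>R w" unfolding u_def using expl[of 1] g1 v(2) by simp
    have "u 1 = (det2 (u 1) (b p) / det2 (a p) (b p)) *\<^sub>R a p + (det2 (a p) (u 1) / det2 (a p) (b p)) *\<^sub>R b p"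
      using cramer nz pM by blast
    also have "det2 (a p) (u 1) / det2 (a p) (b p) = det2 (u 1) (a p) / det2 (b p) (a p)"
      by (subst (1 2) det2_swap) simp
    also note c1
    also note c2
    also have "det2 (u 0) (a q) / det2 (b q) (a q) = det2 (a q) (u 0) / det2 (a q) (b q)"
      by (subst (1 2) det2_swap) simp
    finally have "\<phi> p *\<^sub>R w = (\<phi> q * (det2 v0 (b q) / det2 (a q) (b q))) *\<^sub>R a p
        + (\<phi> q * (det2 (a q) v0 / det2 (a q) (b q))) *\<^sub>R b p"
      unfolding u0 u1 by (simp add: det2_def algebra_simps)
    then have "w = (1 / \<phi> p) *\<^sub>R ((\<phi> q * (det2 v0 (b q) / det2 (a q) (b q))) *\<^sub>R a p
        + (\<phi> q * (det2 (a q) v0 / det2 (a q) (b q))) *\<^sub>R b p)"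
      using php pM by (metis less_irrefl scaleR_one scaleR_scaleR divide_self_if times_divide_eq_left mult.commute)
    then show ?thesis unfolding TP_def by (simp add: scaleR_add_right)
  qed
  show ?thesis unfolding tilde_transport_def
  proof (rule the_equality)
    show "\<exists>va. va 0 = v0 \<and> va 1 = TP \<phi> a b p q v0 \<and> ?ODE va" using ex by blast
  next
    fix w assume "\<exists>v. v 0 = v0 \<and> v 1 = w \<and> ?ODE v"
    then show "w = TP \<phi> a b p q v0" by (rule un)
  qed
qed

lemma W_transfer:
  fixes B T :: "real^2 \<Rightarrow> real^2" and r :: real
  assumes r: "r > 0" and B: "linear B"
    and Ta: "T (a q) = r *\<^sub>R a p" and Tb: "T (b q) = r *\<^sub>R b p" and Tc: "T (c q) = r *\<^sub>R c p"
    and gaa: "gmet G q (a q) (a q) = r\<^sup>2 * gmet G p (a p) (a p)"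
    and gbb: "gmet G q (b q) (b q) = r\<^sup>2 * gmet G p (b p) (b p)"
    and gcc: "gmet G q (c q) (c q) = r\<^sup>2 * gmet G p (c p) (c p)"
    and gab: "gmet G q (a q) (b q) = r\<^sup>2 * gmet G p (a p) (b p)"
  shows "Wdens \<Phi> \<Psi> G a b c p B = Wdens \<Phi> \<Psi> G a b c q (B \<circ> T)"
proof -
  have sq: "sqrt (r\<^sup>2 * x) = r * sqrt x" for x using r by (simp add: real_sqrt_mult)
  have nu: "r\<^sup>2 * X * (r\<^sup>2 * Y) - (r\<^sup>2 * Z)\<^sup>2 = (r\<^sup>2)\<^sup>2 * (X * Y - Z\<^sup>2)" for X Y Z :: real
    by (simp add: power2_eq_square algebra_simps)
  have sq2: "sqrt ((r\<^sup>2)\<^sup>2 * x) = r\<^sup>2 * sqrt x" for x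
    by (simp only: real_sqrt_mult real_sqrt_abs abs_power2)
  have d: "det2 (r *\<^sub>R x) (r *\<^sub>R y) = r\<^sup>2 * det2 x y" for x y
    by (simp add: det2_def power2_eq_square algebra_simps)
  have Bs: "B (r *\<^sub>R x) = r *\<^sub>R B x" for x using B by (simp add: linear_scale)
  have c1: "(r * m) / (r * n) = m / n" for m n :: real using r by simp
  have c2: "(r\<^sup>2 * m) / (r\<^sup>2 * n) = m / n" for m n :: real using r by simp
  have c3: "(r * m) / (r * n + r * k + r * l) = m / (n + k + l)" for m n k l :: real
    using r by (simp add: distrib_left[symmetric])
  show ?thesis
    unfolding Wdens_def Let_def gnorm_def o_def Ta Tb Tc gaa gbb gcc gab Bs d nu sq sq2 norm_scaleR
    using r by (simp add: c1 c2 c3)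
qed

lemma smooth_compose_linear:
  fixes \<psi> :: "real^2 \<Rightarrow> real^2" and S :: "real^2 \<Rightarrow> real^2"
  assumes "smooth_on UNIV \<psi>" "linear S"
  shows "smooth_on UNIV (\<psi> \<circ> S)"
proof -
  obtain D where D: "\<forall>x\<in>UNIV. D [] x = \<psi> x"
    "\<forall>vs. \<forall>x\<in>UNIV. (D vs has_derivative (\<lambda>h. D (h # vs) x)) (at x within UNIV)"
    using assms(1) unfolding smooth_on_def by blast
  define D' where "D' vs x = D (map S vs) (S x)" for vs x
  have "(D' vs has_derivative (\<lambda>h. D' (h # vs) x)) (at x)" for vs x
  proof -
    have "(D (map S vs) has_derivative (\<lambda>h. D (h # map S vs) (S x))) (at (S x))"
      using D(2) by simp
    from diff_chain_at[OF linear_imp_has_derivative[OF assms(2)] this]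
    show ?thesis unfolding D'_def by (simp add: o_def)
  qed
  moreover have "D' [] x = (\<psi> \<circ> S) x" for x using D(1) unfolding D'_def by simp
  ultimately show ?thesis unfolding smooth_on_def by (intro exI[of _ D']) auto
qed

lemma adm_compose:
  fixes \<psi> :: "real^2 \<Rightarrow> real^2" and S Si :: "real^2 \<Rightarrow> real^2"
  assumes "compact (closure {x. \<psi> x \<noteq> 0})" "closure {x. \<psi> x \<noteq> 0} \<subseteq> D1"
    "linear S" "linear Si" "\<And>x. S (Si x) = x" "\<And>x. Si (S x) = x" "\<And>x. x \<in> D2 \<longleftrightarrow> S x \<in> D1"
  shows "compact (closure {x. (\<psi> \<circ> S) x \<noteq> 0})" "closure {x. (\<psi> \<circ> S) x \<noteq> 0} \<subseteq> D2"
proof -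
  have e: "{x. (\<psi> \<circ> S) x \<noteq> 0} = Si ` {x. \<psi> x \<noteq> 0}"
    using assms(5,6) by (auto simp: image_iff) (metis)
  have inj: "inj Si" unfolding inj_def by (metis assms(5))
  have cl: "closure {x. (\<psi> \<circ> S) x \<noteq> 0} = Si ` closure {x. \<psi> x \<noteq> 0}"
    unfolding e using closure_injective_linear_image[OF assms(4) inj] by simp
  show "compact (closure {x. (\<psi> \<circ> S) x \<noteq> 0})" unfolding cl
    by (rule compact_continuous_image[OF linear_continuous_on assms(1)])
       (use assms(4) linear_conv_bounded_linear in blast)
  show "closure {x. (\<psi> \<circ> S) x \<noteq> 0} \<subseteq> D2" unfolding cl
    using assms(2,5,7) by auto
qed

lemma W_nonneg:
  assumes "\<forall>r\<ge>0. \<Phi> r \<ge> 0" "\<forall>x. \<Psi> x \<ge> 0" "\<forall>u. gmet G p u u \<ge> 0"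
  shows "Wdens \<Phi> \<Psi> G a b c p B \<ge> 0"
proof -
  have n: "gnorm G p u \<ge> 0" for u using assms(3) unfolding gnorm_def by simp
  have f: "\<Phi> (norm x / gnorm G p u) \<ge> 0" for x u using assms(1) n by simp
  have w: "gnorm G p u / (gnorm G p (a p) + gnorm G p (b p) + gnorm G p (c p)) \<ge> 0" for u
    using n by (simp add: divide_nonneg_nonneg)
  show ?thesis unfolding Wdens_def Let_def using w f assms(2)
    by (intro add_nonneg_nonneg mult_nonneg_nonneg) (auto simp: gnorm_def[symmetric])
qed

lemma QW_transfer:
  fixes T Ti A :: "real^2 \<Rightarrow> real^2"
  assumes lT: "linear T" and lTi: "linear Ti" and inv1: "\<And>x. T (Ti x) = x" and inv2: "\<And>x. Ti (T x) = x"
    and iso: "\<And>x. gmet G p (T x) (T x) = gmet G q x x"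
    and Wt: "\<And>B. linear B \<Longrightarrow> Wdens \<Phi> \<Psi> G a b c p B = Wdens \<Phi> \<Psi> G a b c q (B \<circ> T)"
    and Wnn: "\<And>B. Wdens \<Phi> \<Psi> G a b c p B \<ge> 0"
    and lm: "{x. gmet G q x x < 1} \<in> lmeasurable"
    and A: "linear A"
  shows "QWdens \<Phi> \<Psi> G a b c p A = QWdens \<Phi> \<Psi> G a b c q (A \<circ> T)"
proof -
  define Dp where "Dp = {x. gmet G p x x < 1}"
  define Dq where "Dq = {x. gmet G q x x < 1}"
  have DpT: "Dp = T ` Dq"
  proof
    show "T ` Dq \<subseteq> Dp" unfolding Dp_def Dq_def using iso by auto
    show "Dp \<subseteq> T ` Dq"
    proof
      fix x assume "x \<in> Dp"
      then have "Ti x \<in> Dq" unfolding Dp_def Dq_def using iso[of "Ti x"] inv1 by simp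
      then show "x \<in> T ` Dq" using inv1[of x] by (metis image_eqI)
    qed
  qed
  have memq: "x \<in> Dq \<longleftrightarrow> T x \<in> Dp" for x by (simp add: Dp_def Dq_def iso)
  have memp: "y \<in> Dp \<longleftrightarrow> Ti y \<in> Dq" for y using iso[of "Ti y"] inv1 by (simp add: Dp_def Dq_def)
  have injT: "inj T" unfolding inj_def by (metis inv2)
  have det: "det (matrix T) \<noteq> 0" using det_nz_iff_inj lT injT by blast
  have meas: "measure lebesgue Dp = \<bar>det (matrix T)\<bar> * measure lebesgue Dq"
    unfolding DpT using measure_linear_image[OF lT lm[folded Dq_def]] .
  have intg: "integral Dp f = \<bar>det (matrix T)\<bar> * integral Dq (\<lambda>x. f (T x))"
    if fnn: "\<And>y. f y \<ge> 0" for f :: "real^2 \<Rightarrow> real"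
  proof (cases "f absolutely_integrable_on Dp")
    case True
    let ?F = "\<lambda>y. vec (f y) :: real^1"
    have "?F absolutely_integrable_on (T ` Dq)" using True DpT absolutely_integrable_on_1_iff[where f="?F"] by simp
    then have "integral (T ` Dq) ?F = \<bar>det (matrix T)\<bar> *\<^sub>R integral Dq (?F \<circ> T)"
      using integral_change_of_variables_linear[OF lT] by blast
    then have "vec (integral Dp f) = (\<bar>det (matrix T)\<bar> *\<^sub>R vec (integral Dq (\<lambda>x. f (T x))) :: real^1)"
      unfolding DpT[symmetric] by (simp add: integral_on_1_eq[where f="?F"] integral_on_1_eq[where f="\<lambda>x. vec (f (T x)) :: real^1"] o_def)
    from arg_cong[where f="\<lambda>v. v $ 1", OF this] show ?thesis by simp
  next
    case False
    let ?F = "\<lambda>y. vec (f y) :: real^1"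
    have ni1: "\<not> f integrable_on Dp" using nonnegative_absolutely_integrable_1 fnn False by blast
    have ni2: "\<not> (\<lambda>x. f (T x)) integrable_on Dq"
    proof
      assume "(\<lambda>x. f (T x)) integrable_on Dq"
      then have "(\<lambda>x. f (T x)) absolutely_integrable_on Dq" using nonnegative_absolutely_integrable_1 fnn by blast
      then have "(?F \<circ> T) absolutely_integrable_on Dq" using absolutely_integrable_on_1_iff[where f="?F \<circ> T"] by (simp add: o_def)
      then have "?F absolutely_integrable_on (T ` Dq)" using absolutely_integrable_on_linear_image[OF lT] by blast
      then have "f absolutely_integrable_on Dp" using DpT absolutely_integrable_on_1_iff[where f="?F"] by simp
      then show False using False by blast
    qed
    show ?thesis using ni1 ni2 by (simp add: not_integrable_integral)
  qed
  have val: "integral Dq (\<lambda>x. Wdens \<Phi> \<Psi> G a b c q (\<lambda>v. (A \<circ> T) v + frechet_derivative (\<psi> \<circ> T) (at x) v)) / measure lebesgue Dq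
     = integral Dp (\<lambda>x. Wdens \<Phi> \<Psi> G a b c p (\<lambda>v. A v + frechet_derivative \<psi> (at x) v)) / measure lebesgue Dp"
    if sm: "smooth_on UNIV \<psi>" for \<psi> :: "real^2 \<Rightarrow> real^2"
  proof -
    obtain D where D: "\<forall>x\<in>UNIV. D [] x = \<psi> x"
      "\<forall>vs. \<forall>x\<in>UNIV. (D vs has_derivative (\<lambda>h. D (h # vs) x)) (at x within UNIV)"
      using sm unfolding smooth_on_def by blast
    have D0: "D [] = \<psi>" using D(1) by auto
    have fd: "(\<psi> has_derivative frechet_derivative \<psi> (at y)) (at y)" for y
      using D(2) D0 frechet_derivative_works unfolding differentiable_def by fastforce
    have fdT: "frechet_derivative (\<psi> \<circ> T) (at x) = frechet_derivative \<psi> (at (T x)) \<circ> T" for x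
      using diff_chain_at[OF linear_imp_has_derivative[OF lT] fd[of "T x"]] frechet_derivative_at by metis
    have linfd: "linear (frechet_derivative \<psi> (at y))" for y using has_derivative_linear fd by blast
    define f where "f y = Wdens \<Phi> \<Psi> G a b c p (\<lambda>v. A v + frechet_derivative \<psi> (at y) v)" for y
    have eq: "Wdens \<Phi> \<Psi> G a b c q (\<lambda>v. (A \<circ> T) v + frechet_derivative (\<psi> \<circ> T) (at x) v) = f (T x)" for x
    proof -
      have "linear (\<lambda>v. A v + frechet_derivative \<psi> (at (T x)) v)"
        using linear_compose_add[OF A linfd] by blast
      from Wt[OF this] show ?thesis unfolding f_def fdT by (simp add: o_def)
    qed
    have nn: "f y \<ge> 0" for y unfolding f_def by (rule Wnn)
    show ?thesis unfolding eq f_def[symmetric] intg[OF nn] meas using det by simp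
  qed
  let ?adm = "\<lambda>D \<psi>. smooth_on UNIV \<psi> \<and> compact (closure {x. \<psi> x \<noteq> 0}) \<and> closure {x. \<psi> x \<noteq> 0} \<subseteq> D"
  let ?Vp = "\<lambda>\<psi>. integral Dp (\<lambda>x. Wdens \<Phi> \<Psi> G a b c p (\<lambda>v. A v + frechet_derivative \<psi> (at x) v)) / measure lebesgue Dp"
  let ?Vq = "\<lambda>\<psi>. integral Dq (\<lambda>x. Wdens \<Phi> \<Psi> G a b c q (\<lambda>v. (A \<circ> T) v + frechet_derivative \<psi> (at x) v)) / measure lebesgue Dq"
  have QWp: "QWdens \<Phi> \<Psi> G a b c p A = Inf {?Vp \<psi> | \<psi>. ?adm Dp \<psi>}"
    unfolding QWdens_def Let_def Dp_def by simp
  have QWq: "QWdens \<Phi> \<Psi> G a b c q (A \<circ> T) = Inf {?Vq \<psi> | \<psi>. ?adm Dq \<psi>}"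
    unfolding QWdens_def Let_def Dq_def by simp
  have "{?Vp \<psi> | \<psi>. ?adm Dp \<psi>} = {?Vq \<psi> | \<psi>. ?adm Dq \<psi>}"
  proof (intro equalityI subsetI)
    fix z assume "z \<in> {?Vp \<psi> | \<psi>. ?adm Dp \<psi>}"
    then obtain \<psi> where z: "z = ?Vp \<psi>" and ad: "?adm Dp \<psi>" by blast
    have "?adm Dq (\<psi> \<circ> T)"
      using smooth_compose_linear[OF _ lT] adm_compose[OF _ _ lT lTi inv1 inv2 memq] ad by blast
    moreover have "z = ?Vq (\<psi> \<circ> T)" using z val ad by simp
    ultimately show "z \<in> {?Vq \<psi> | \<psi>. ?adm Dq \<psi>}" by blast
  next
    fix z assume "z \<in> {?Vq \<psi> | \<psi>. ?adm Dq \<psi>}"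
    then obtain \<psi> where z: "z = ?Vq \<psi>" and ad: "?adm Dq \<psi>" by blast
    have ad2: "?adm Dp (\<psi> \<circ> Ti)"
      using smooth_compose_linear[OF _ lTi] adm_compose[OF _ _ lTi lT inv2 inv1 memp] ad by blast
    have e: "(\<psi> \<circ> Ti) \<circ> T = \<psi>" using inv2 by (simp add: o_def)
    have "z = ?Vp (\<psi> \<circ> Ti)" using z val[of "\<psi> \<circ> Ti"] ad2 unfolding e by simp
    then show "z \<in> {?Vp \<psi> | \<psi>. ?adm Dp \<psi>}" using ad2 by blast
  qed
  then show ?thesis unfolding QWp QWq by simp
qed

lemma gmet_quad:
  "gmet G p (s *\<^sub>R u + t *\<^sub>R w) (s *\<^sub>R u + t *\<^sub>R w)
   = s\<^sup>2 * gmet G p u u + s * t * gmet G p u w + t * s * gmet G p w u + t\<^sup>2 * gmet G p w w"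
  unfolding gmet_def
  by (simp add: matrix_vector_right_distrib matrix_vector_mult_scaleR inner_add_left inner_add_right
      power2_eq_square algebra_simps)

lemma gmet_scale: "gmet G p (c *\<^sub>R x) (c *\<^sub>R x) = c\<^sup>2 * gmet G p x x"
  unfolding gmet_def by (simp add: matrix_vector_mult_scaleR power2_eq_square)

lemma D_lmeasurable:
  assumes pd: "\<forall>u. u \<noteq> 0 \<longrightarrow> gmet G q u u > 0"
  shows "{x. gmet G q x x < 1} \<in> lmeasurable"
proof -
  have cont: "continuous_on UNIV (\<lambda>x. gmet G q x x)"
    unfolding gmet_def
    by (intro continuous_intros linear_continuous_on linear_linear[THEN iffD1] matrix_vector_mul_linear)
  obtain x0 where x0: "x0 \<in> sphere 0 1" "\<forall>y\<in>sphere 0 1. gmet G q x0 x0 \<le> gmet G q y y"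
  proof -
    have ne: "sphere (0::real^2) 1 \<noteq> {}" by simp
    show ?thesis using continuous_attains_inf[OF compact_sphere ne continuous_on_subset[OF cont]] that by blast
  qed
  define m where "m = gmet G q x0 x0"
  have "x0 \<noteq> 0" using x0(1) by auto
  then have m: "m > 0" unfolding m_def using pd by blast
  have low: "gmet G q x x \<ge> m * (norm x)\<^sup>2" for x
  proof (cases "x = 0")
    case True then show ?thesis by (simp add: gmet_def)
  next
    case False
    have "x /\<^sub>R norm x \<in> sphere 0 1" using False by simp
    then have "m \<le> gmet G q (x /\<^sub>R norm x) (x /\<^sub>R norm x)" using x0(2) unfolding m_def by blast
    also have "\<dots> = gmet G q x x / (norm x)\<^sup>2"
      by (simp only: gmet_scale) (simp add: power_inverse divide_inverse mult.commute)
    finally have "m \<le> gmet G q x x / (norm x)\<^sup>2" .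
    moreover have "(norm x)\<^sup>2 > 0" using False by simp
    ultimately show ?thesis by (simp add: pos_le_divide_eq)
  qed
  have bnd: "bounded {x. gmet G q x x < 1}"
    unfolding bounded_iff
  proof (intro exI[of _ "max 1 (1/m)"] ballI)
    fix x assume "x \<in> {x. gmet G q x x < 1}"
    then have "m * (norm x)\<^sup>2 < 1" using low[of x] by simp
    then have "(norm x)\<^sup>2 < 1 / m" using m by (simp add: field_simps)
    show "norm x \<le> max 1 (1/m)"
    proof (cases "norm x \<le> 1")
      case True then show ?thesis by linarith
    next
      case False
      then have "norm x \<le> norm x * norm x" using mult_right_mono[of 1 "norm x" "norm x"] by simp
      with \<open>(norm x)\<^sup>2 < 1 / m\<close> show ?thesis unfolding power2_eq_square by linarith
    qed
  qed
  have op: "open {x. gmet G q x x < 1}"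
    by (rule open_Collect_less[OF cont continuous_on_const])
  show ?thesis by (rule lmeasurable_open[OF bnd op])
qed

lemma TP_linear: "linear (TP \<phi> a b p q)"
proof (rule linearI)
  fix x y :: "real^2" and c :: real
  show "TP \<phi> a b p q (x + y) = TP \<phi> a b p q x + TP \<phi> a b p q y"
    unfolding TP_def by (simp add: det2_def algebra_simps add_divide_distrib diff_divide_distrib)
  show "TP \<phi> a b p q (c *\<^sub>R x) = c *\<^sub>R TP \<phi> a b p q x"
    unfolding TP_def by (simp add: det2_def algebra_simps)
qed

lemma det2_self[simp]: "det2 x x = 0" by (simp add: det2_def)

lemma TP_a: "det2 (a q) (b q) \<noteq> 0 \<Longrightarrow> TP \<phi> a b p q (a q) = (\<phi> q / \<phi> p) *\<^sub>R a p"
  by (simp add: TP_def)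
lemma TP_b: "det2 (a q) (b q) \<noteq> 0 \<Longrightarrow> TP \<phi> a b p q (b q) = (\<phi> q / \<phi> p) *\<^sub>R b p"
  by (simp add: TP_def)

lemma TP_inv:
  assumes "\<phi> p > 0" "\<phi> q > 0" "det2 (a p) (b p) \<noteq> 0" "det2 (a q) (b q) \<noteq> 0"
  shows "TP \<phi> a b q p (TP \<phi> a b p q x) = x"
proof -
  define \<alpha> where "\<alpha> = det2 x (b q) / det2 (a q) (b q)"
  define \<beta> where "\<beta> = det2 (a q) x / det2 (a q) (b q)"
  have e: "TP \<phi> a b p q x = (\<phi> q / \<phi> p * \<alpha>) *\<^sub>R a p + (\<phi> q / \<phi> p * \<beta>) *\<^sub>R b p"
    unfolding TP_def \<alpha>_def \<beta>_def by (simp add: scaleR_add_right)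
  have l: "linear (TP \<phi> a b q p)" by (rule TP_linear)
  have "TP \<phi> a b q p (TP \<phi> a b p q x) = (\<phi> q / \<phi> p * \<alpha>) *\<^sub>R TP \<phi> a b q p (a p) + (\<phi> q / \<phi> p * \<beta>) *\<^sub>R TP \<phi> a b q p (b p)"
    unfolding e using l by (simp add: linear_add linear_scale)
  also have "\<dots> = \<alpha> *\<^sub>R a q + \<beta> *\<^sub>R b q"
    using assms by (simp add: TP_a TP_b)
  also have "\<dots> = x" unfolding \<alpha>_def \<beta>_def using cramer[OF assms(4)] by metis
  finally show ?thesis .
qed

theorem proposition5p5:
  fixes M :: "(real^2) set" and G :: "real^2 \<Rightarrow> real^2^2" and \<Gamma> :: "real^2 \<Rightarrow> real^2^2^2"
    and a b c :: "real^2 \<Rightarrow> real^2" and \<phi> :: "real^2 \<Rightarrow> real"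
    and \<Phi> \<Psi> :: "real \<Rightarrow> real"
    and \<alpha>\<Phi> C\<Phi> L\<Phi> \<alpha>\<Psi> C\<Psi> L\<Psi> :: real
  assumes M: "smooth_disc M"
    and G: "riemannian_metric M G"
    and conn: "flat_symmetric_connection M \<Gamma>"
    and par: "parallel_field M \<Gamma> a" "parallel_field M \<Gamma> b" "parallel_field M \<Gamma> c"
    and sum0: "\<forall>p\<in>M. a p + b p + c p = 0"
    and indep: "\<forall>p\<in>M. det2 (a p) (b p) \<noteq> 0 \<and> det2 (b p) (c p) \<noteq> 0 \<and> det2 (a p) (c p) \<noteq> 0"
    and pos_consts: "\<alpha>\<Phi> > 0" "C\<Phi> > 0" "L\<Phi> > 0" "\<alpha>\<Psi> > 0" "C\<Psi> > 0" "L\<Psi> > 0"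
    and Phi_nonneg: "\<forall>r\<ge>0. \<Phi> r \<ge> 0"
    and Phi_zero: "\<forall>r\<ge>0. \<Phi> r = 0 \<longleftrightarrow> r = 1"
    and Phi_lower: "\<forall>r\<ge>0. \<Phi> r \<ge> \<alpha>\<Phi> * (r - 1)\<^sup>2"
    and Phi_upper: "\<forall>r\<ge>0. \<Phi> r \<le> C\<Phi> * (1 + r\<^sup>2)"
    and Phi_lip: "\<forall>r>0. \<forall>s>0. \<bar>\<Phi> r - \<Phi> s\<bar> \<le> L\<Phi> * (1 + \<bar>r\<bar> + \<bar>s\<bar>) * \<bar>r - s\<bar>"
    and Psi_nonneg: "\<forall>x. \<Psi> x \<ge> 0"
    and Psi_zero: "\<forall>x. \<Psi> x = 0 \<longleftrightarrow> x = 1"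
    and Psi_neg: "\<forall>x<0. \<Psi> x > \<alpha>\<Psi> * sqrt \<bar>x\<bar>"
    and Psi_upper: "\<forall>x. \<Psi> x < C\<Psi> * (1 + \<bar>x\<bar>)"
    and Psi_lip: "\<forall>x y. \<bar>\<Psi> x - \<Psi> y\<bar> \<le> L\<Psi> * \<bar>x - y\<bar>"
    and phi_smooth: "smooth_on M \<phi>"
    and conf: "conformal M G \<Gamma> \<phi>"
  shows "\<forall>p\<in>M. \<forall>q\<in>M. \<forall>\<gamma> \<gamma>'. C1_path_in M \<gamma> \<gamma>' \<and> \<gamma> 0 = q \<and> \<gamma> 1 = p \<longrightarrow>
           (\<forall>A :: real^2 \<Rightarrow> real^2. linear A \<longrightarrow>
              Wdens \<Phi> \<Psi> G a b c p A = Wdens \<Phi> \<Psi> G a b c q (A \<circ> tilde_transport M \<Gamma> \<phi> \<gamma> \<gamma>')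
            \<and> QWdens \<Phi> \<Psi> G a b c p A = QWdens \<Phi> \<Psi> G a b c q (A \<circ> tilde_transport M \<Gamma> \<phi> \<gamma> \<gamma>'))"
proof (intro ballI allI impI conjI)
  fix p q \<gamma> \<gamma>' and A :: "real^2 \<Rightarrow> real^2"
  assume pM: "p \<in> M" and qM: "q \<in> M" and gg: "C1_path_in M \<gamma> \<gamma>' \<and> \<gamma> 0 = q \<and> \<gamma> 1 = p"
    and lA: "linear A"
  have php: "\<forall>x\<in>M. \<phi> x > 0" using conf unfolding conformal_def by blast
  have nzab: "\<forall>p\<in>M. det2 (a p) (b p) \<noteq> 0" using indep by blast
  define T where "T = TP \<phi> a b p q"
  define Ti where "Ti = TP \<phi> a b q p"
  have tt: "tilde_transport M \<Gamma> \<phi> \<gamma> \<gamma>' = T"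
    unfolding T_def using transport_eq[OF par(1) par(2) nzab phi_smooth php] gg by blast
  define r where "r = \<phi> q / \<phi> p"
  have pp: "\<phi> p > 0" and pq: "\<phi> q > 0" using php pM qM by auto
  have r: "r > 0" unfolding r_def using pp pq by simp
  have Dp: "det2 (a p) (b p) \<noteq> 0" and Dq: "det2 (a q) (b q) \<noteq> 0" using nzab pM qM by auto
  have cf: "gmet G q (\<xi> q) (\<eta> q) = r\<^sup>2 * gmet G p (\<xi> p) (\<eta> p)"
    if "parallel_field M \<Gamma> \<xi>" "parallel_field M \<Gamma> \<eta>" for \<xi> \<eta>
  proof -
    have "gmet G p (\<xi> p) (\<eta> p) / (\<phi> p)\<^sup>2 = gmet G q (\<xi> q) (\<eta> q) / (\<phi> q)\<^sup>2"
      using conf that pM qM unfolding conformal_def by blast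
    then show ?thesis unfolding r_def using pp pq by (simp add: field_simps power_divide)
  qed
  have lT: "linear T" and lTi: "linear Ti" unfolding T_def Ti_def by (rule TP_linear)+
  have Ta: "T (a q) = r *\<^sub>R a p" unfolding T_def r_def using Dq by (rule TP_a)
  have Tb: "T (b q) = r *\<^sub>R b p" unfolding T_def r_def using Dq by (rule TP_b)
  have cx: "c x = - a x - b x" if "x \<in> M" for x
  proof -
    have "c x = (a x + b x + c x) - a x - b x" by (simp add: algebra_simps)
    also have "\<dots> = - a x - b x" using sum0 that by simp
    finally show ?thesis .
  qed
  have cq: "c q = - a q - b q" and cp: "c p = - a p - b p" using cx pM qM by auto
  have Tc: "T (c q) = r *\<^sub>R c p"
    unfolding cq cp using lT Ta Tb by (simp add: linear_diff linear_neg scaleR_diff_right)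
  have Wt: "Wdens \<Phi> \<Psi> G a b c p B = Wdens \<Phi> \<Psi> G a b c q (B \<circ> T)" if "linear B" for B
    by (rule W_transfer[OF r that Ta Tb Tc cf[OF par(1) par(1)] cf[OF par(2) par(2)]
        cf[OF par(3) par(3)] cf[OF par(1) par(2)]])
  show "Wdens \<Phi> \<Psi> G a b c p A = Wdens \<Phi> \<Psi> G a b c q (A \<circ> tilde_transport M \<Gamma> \<phi> \<gamma> \<gamma>')"
    unfolding tt by (rule Wt[OF lA])
  have inv1: "T (Ti x) = x" for x unfolding T_def Ti_def by (rule TP_inv[OF pq pp Dq Dp])
  have inv2: "Ti (T x) = x" for x unfolding T_def Ti_def by (rule TP_inv[OF pp pq Dp Dq])
  have iso: "gmet G p (T x) (T x) = gmet G q x x" for x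
  proof -
    define \<alpha> where "\<alpha> = det2 x (b q) / det2 (a q) (b q)"
    define \<beta> where "\<beta> = det2 (a q) x / det2 (a q) (b q)"
    have x: "x = \<alpha> *\<^sub>R a q + \<beta> *\<^sub>R b q" unfolding \<alpha>_def \<beta>_def by (rule cramer[OF Dq])
    have Tx: "T x = (r * \<alpha>) *\<^sub>R a p + (r * \<beta>) *\<^sub>R b p"
      unfolding T_def TP_def r_def \<alpha>_def \<beta>_def by (simp add: scaleR_add_right)
    show ?thesis
      apply (subst (3 4) x)
      unfolding Tx gmet_quad cf[OF par(1) par(1)] cf[OF par(2) par(2)] cf[OF par(1) par(2)] cf[OF par(2) par(1)]
      by (simp add: power2_eq_square algebra_simps)
  qed
  have pdp: "\<forall>u. gmet G p u u \<ge> 0"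
  proof
    fix u show "gmet G p u u \<ge> 0"
      using G pM unfolding riemannian_metric_def by (cases "u = 0") (auto simp: gmet_def intro: less_imp_le)
  qed
  have Wnn: "Wdens \<Phi> \<Psi> G a b c p B \<ge> 0" for B by (rule W_nonneg[OF Phi_nonneg Psi_nonneg pdp])
  have lm: "{x. gmet G q x x < 1} \<in> lmeasurable"
    using G qM unfolding riemannian_metric_def by (intro D_lmeasurable) blast
  show "QWdens \<Phi> \<Psi> G a b c p A = QWdens \<Phi> \<Psi> G a b c q (A \<circ> tilde_transport M \<Gamma> \<phi> \<gamma> \<gamma>')"
    unfolding tt by (rule QW_transfer[OF lT lTi inv1 inv2 iso Wt Wnn lm lA])
qed

end
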